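(* For every Weyl element $w\in\mathbf{W}$ there is $z_w\in\mathcal{Z}$ such that $d_{w_0w}=w_0d_ww_0d_{w_0}z_w$.
   Context: $F$ is a non-archimedean local field with uniformizer $\varpi$. $G=GL_n(F)$ with center $\mathcal{Z}$ (scalar matrices). $\mathbf{W}$ is the Weyl group of permutation matrices and $w_0$ its longest element. Roots $\alpha_{i,j}(\mathrm{diag}(t))=t_i/t_j$, $\Phi^+=\{\alpha_{i,j}:i<j\}$, $\Phi^-=\{\alpha_{i,j}:i>j\}$, $\Delta=\{\alpha_{i,i+1}\}$, $(w\alpha)(t)=\alpha(w^{-1}tw)$, $\langle\alpha_{i,j},\bar{k}\rangle=k_i-k_j$. For $\bar{k}\in\mathbb{Z}^n$, $\varpi^{\bar{k}}=\mathrm{diag}(\varpi^{k_1},\dots,\varpi^{k_n})$. For $w\in\mathbf{W}$, $d_w$ is the element $\varpi^{\bar{k}}$ with $k_n=0$ and, for all $\alpha\in\Delta$, $\langle\alpha,\bar{k}\rangle=0$ if $w^{-1}\alpha\in\Phi^+$ and $\langle\alpha,\bar{k}\rangle=-1$ if $w^{-1}\alpha\in\Phi^-$. *)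

theory Defs
  imports "Jordan_Normal_Form.Determinant"
begin

text \<open>Non-archimedean local field, given via a normalized discrete valuation
  v (meaningful on nonzero elements) with uniformizer varpi: v is a valuation,
  the field is complete for it and the residue field is finite.\<close>
definition nonarch_local_field_unif :: "('a::field \<Rightarrow> int) \<Rightarrow> 'a \<Rightarrow> bool" where
  "nonarch_local_field_unif v \<pi> \<longleftrightarrow>
     (\<forall>x y. x \<noteq> 0 \<longrightarrow> y \<noteq> 0 \<longrightarrow> v (x * y) = v x + v y) \<and>
     (\<forall>x y. x \<noteq> 0 \<longrightarrow> y \<noteq> 0 \<longrightarrow> x + y \<noteq> 0 \<longrightarrow> v (x + y) \<ge> min (v x) (v y)) \<and>
     \<pi> \<noteq> 0 \<and> v \<pi> = 1 \<and>
     (\<exists>S. finite S \<and> (\<forall>s\<in>S. s = 0 \<or> v s \<ge> 0) \<and>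
        (\<forall>x. (x = 0 \<or> v x \<ge> 0) \<longrightarrow> (\<exists>s\<in>S. x - s = 0 \<or> v (x - s) \<ge> 1))) \<and>
     (\<forall>x :: nat \<Rightarrow> 'a.
        (\<forall>N::int. \<exists>M. \<forall>p\<ge>M. \<forall>q\<ge>M. x p = x q \<or> v (x p - x q) \<ge> N) \<longrightarrow>
        (\<exists>L. \<forall>N::int. \<exists>M. \<forall>p\<ge>M. x p = L \<or> v (x p - L) \<ge> N))"

text \<open>Indices 1..n of the paper are 0..n-1 here. The permutation matrix of sigma
  sends e_j to e_(sigma j).\<close>
definition perm_mat :: "nat \<Rightarrow> (nat \<Rightarrow> nat) \<Rightarrow> 'a::{zero,one} mat" where
  "perm_mat n \<sigma> = mat n n (\<lambda>(i,j). if i = \<sigma> j then 1 else 0)"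

definition weyl :: "nat \<Rightarrow> 'a::{zero,one} mat set" where
  "weyl n = {perm_mat n \<sigma> | \<sigma>. \<sigma> permutes {..<n}}"

definition w0 :: "nat \<Rightarrow> 'a::{zero,one} mat" where
  "w0 n = perm_mat n (\<lambda>i. if i < n then n - 1 - i else i)"

definition center_GL :: "nat \<Rightarrow> 'a::field mat set" where
  "center_GL n = {c \<cdot>\<^sub>m 1\<^sub>m n | c. c \<noteq> 0}"

text \<open>For w = perm_mat n sigma one has (w beta)(t) = beta(w^-1 t w), which sends
  alpha_(i,j) to alpha_(sigma i, sigma j); hence w^-1 alpha_(i,i+1) =
  alpha_(inv sigma i, inv sigma (i+1)), which lies in Phi^- iff
  inv sigma i > inv sigma (i+1).\<close>
definition d_exp :: "nat \<Rightarrow> (nat \<Rightarrow> nat) \<Rightarrow> nat \<Rightarrow> int" where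
  "d_exp n \<sigma> = (THE k. k (n - 1) = 0 \<and> (\<forall>i\<ge>n. k i = 0) \<and>
      (\<forall>i. i + 1 < n \<longrightarrow>
         k i - k (i + 1) = (if Hilbert_Choice.inv \<sigma> i < Hilbert_Choice.inv \<sigma> (i + 1) then 0 else -1)))"

definition varpi_pow :: "nat \<Rightarrow> 'a::field \<Rightarrow> (nat \<Rightarrow> int) \<Rightarrow> 'a mat" where
  "varpi_pow n \<pi> k = mat n n (\<lambda>(i,j). if i = j then \<pi> powi (k i) else 0)"

definition d_elt :: "nat \<Rightarrow> 'a::field \<Rightarrow> 'a mat \<Rightarrow> 'a mat" where
  "d_elt n \<pi> w = varpi_pow n \<pi> (d_exp n (THE \<sigma>. \<sigma> permutes {..<n} \<and> w = perm_mat n \<sigma>))"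

end

theory Submission
  imports Defs
begin

definition tau :: "nat \<Rightarrow> nat \<Rightarrow> nat" where
  "tau n = (\<lambda>i. if i < n then n - 1 - i else i)"

lemma tau_invol: "tau n (tau n i) = i"
  by (auto simp: tau_def)

lemma tau_comp: "tau n \<circ> tau n = id"
  by (auto simp: tau_invol)

lemma tau_permutes: "tau n permutes {..<n}"
proof (rule bij_imp_permutes)
  show "bij_betw (tau n) {..<n} {..<n}"
    by (rule bij_betw_byWitness[where f'="tau n"]) (auto simp: tau_invol, auto simp: tau_def)
qed (auto simp: tau_def)

lemma inv_tau: "Hilbert_Choice.inv (tau n) = tau n"
  using inv_unique_comp[OF tau_comp tau_comp] .

lemma w0_eq: "w0 n = perm_mat n (tau n)"
  by (simp add: w0_def tau_def)

definition dprop :: "nat \<Rightarrow> (nat \<Rightarrow> nat) \<Rightarrow> (nat \<Rightarrow> int) \<Rightarrow> bool" where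
  "dprop n \<sigma> k \<longleftrightarrow> k (n - 1) = 0 \<and> (\<forall>i\<ge>n. k i = 0) \<and>
      (\<forall>i. i + 1 < n \<longrightarrow>
         k i - k (i + 1) = (if Hilbert_Choice.inv \<sigma> i < Hilbert_Choice.inv \<sigma> (i + 1) then 0 else -1))"

lemma dprop_unique:
  assumes "dprop n \<sigma> k" "dprop n \<sigma> k'"
  shows "k = k'"
proof
  fix i
  show "k i = k' i"
  proof (cases "i < n")
    case False then show ?thesis using assms by (simp add: dprop_def)
  next
    case True
    have "\<forall>i. i + m = n - 1 \<longrightarrow> k i = k' i" for m
    proof (induction m)
      case 0 then show ?case using assms by (simp add: dprop_def)
    next
      case (Suc m)
      show ?case
      proof (intro allI impI)
        fix i assume h: "i + Suc m = n - 1"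
        then have "k (i+1) = k' (i+1)" using Suc by simp
        moreover have "i + 1 < n" using h by simp
        moreover have "k i - k (i+1) = k' i - k' (i+1)" using assms \<open>i + 1 < n\<close> unfolding dprop_def by simp
        ultimately show "k i = k' i" by simp
      qed
    qed
    moreover have "i + (n - 1 - i) = n - 1" using True by simp
    ultimately show ?thesis by blast
  qed
qed

lemma dprop_exists: "\<exists>k. dprop n \<sigma> k"
proof -
  define f where "f j = (if Hilbert_Choice.inv \<sigma> j < Hilbert_Choice.inv \<sigma> (j + 1) then 0 else -1 :: int)" for j
  define k where "k i = (\<Sum>j\<in>{i..<n-1}. f j)" for i
  have "dprop n \<sigma> k"
    unfolding dprop_def
  proof (intro conjI allI impI)
    fix i assume "i + 1 < n"
    then have "k i = f i + k (i+1)" unfolding k_def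
      by (simp add: sum.atLeast_Suc_lessThan)
    then show "k i - k (i + 1) = (if Hilbert_Choice.inv \<sigma> i < Hilbert_Choice.inv \<sigma> (i + 1) then 0 else -1)"
      by (simp add: f_def)
  qed (auto simp: k_def)
  then show ?thesis by blast
qed

lemma d_exp_prop: "dprop n \<sigma> (d_exp n \<sigma>)"
proof -
  obtain k where k: "dprop n \<sigma> k" using dprop_exists by blast
  have "d_exp n \<sigma> = k"
    unfolding d_exp_def dprop_def[symmetric]
    by (rule the_equality[where P="dprop n \<sigma>", OF k]) (rule dprop_unique[OF _ k])
  then show ?thesis using k by simp
qed



lemma perm_mat_carrier[simp]: "perm_mat n \<sigma> \<in> carrier_mat n n"
  by (simp add: perm_mat_def)

lemma varpi_pow_carrier[simp]: "varpi_pow n \<pi> f \<in> carrier_mat n n"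
  by (simp add: varpi_pow_def)

lemma perm_left:
  assumes s: "\<sigma> permutes {..<n}" and A: "A \<in> carrier_mat n n"
  shows "perm_mat n \<sigma> * (A :: 'a::comm_ring_1 mat) = mat n n (\<lambda>(i,j). A $$ (Hilbert_Choice.inv \<sigma> i, j))"
proof (rule eq_matI)
  fix i j assume ij: "i < dim_row (mat n n (\<lambda>(i,j). A $$ (Hilbert_Choice.inv \<sigma> i, j)))"
     "j < dim_col (mat n n (\<lambda>(i,j). A $$ (Hilbert_Choice.inv \<sigma> i, j)))"
  then have i: "i < n" and j: "j < n" by auto
  have inv_in: "Hilbert_Choice.inv \<sigma> i < n"
    using permutes_in_image[OF permutes_inv[OF s]] i by simp
  have "(perm_mat n \<sigma> * A) $$ (i,j) = (\<Sum>l\<in>{0..<n}. (if i = \<sigma> l then 1 else 0) * A $$ (l, j))"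
    using i j A by (simp add: perm_mat_def scalar_prod_def)
  also have "\<dots> = (\<Sum>l\<in>{0..<n}. (if l = Hilbert_Choice.inv \<sigma> i then A $$ (l, j) else 0))"
  proof (intro sum.cong refl)
    fix l
    have eqv: "(i = \<sigma> l) = (l = Hilbert_Choice.inv \<sigma> i)"
      using permutes_inv_eq[OF s, of i l] by auto
    show "(if i = \<sigma> l then 1 else 0) * A $$ (l, j) = (if l = Hilbert_Choice.inv \<sigma> i then A $$ (l, j) else 0)"
      by (simp only: eqv) simp
  qed
  also have "\<dots> = A $$ (Hilbert_Choice.inv \<sigma> i, j)"
    using inv_in by (simp add: sum.delta')
  finally show "(perm_mat n \<sigma> * A) $$ (i,j) = mat n n (\<lambda>(i,j). A $$ (Hilbert_Choice.inv \<sigma> i, j)) $$ (i,j)"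
    using i j by simp
qed (use A in \<open>auto simp: perm_mat_def\<close>)

lemma perm_right:
  assumes s: "\<sigma> permutes {..<n}" and A: "A \<in> carrier_mat n n"
  shows "(A :: 'a::comm_ring_1 mat) * perm_mat n \<sigma> = mat n n (\<lambda>(i,j). A $$ (i, \<sigma> j))"
proof (rule eq_matI)
  fix i j assume ij: "i < dim_row (mat n n (\<lambda>(i,j). A $$ (i, \<sigma> j)))"
     "j < dim_col (mat n n (\<lambda>(i,j). A $$ (i, \<sigma> j)))"
  then have i: "i < n" and j: "j < n" by auto
  have s_in: "\<sigma> j < n"
    using permutes_in_image[OF s] j by simp
  have "(A * perm_mat n \<sigma>) $$ (i,j) = (\<Sum>l\<in>{0..<n}. A $$ (i, l) * (if l = \<sigma> j then 1 else 0))"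
    using i j A by (simp add: perm_mat_def scalar_prod_def)
  also have "\<dots> = (\<Sum>l\<in>{0..<n}. (if l = \<sigma> j then A $$ (i, l) else 0))"
    by (intro sum.cong refl) simp
  also have "\<dots> = A $$ (i, \<sigma> j)"
    using s_in by (simp add: sum.delta')
  finally show "(A * perm_mat n \<sigma>) $$ (i,j) = mat n n (\<lambda>(i,j). A $$ (i, \<sigma> j)) $$ (i,j)"
    using i j by simp
qed (use A in \<open>auto simp: perm_mat_def\<close>)

lemma diag_right:
  assumes A: "A \<in> carrier_mat n n"
  shows "A * varpi_pow n \<pi> g = mat n n (\<lambda>(i,j). A $$ (i, j) * \<pi> powi g j)"
proof (rule eq_matI)
  fix i j assume ij: "i < dim_row (mat n n (\<lambda>(i,j). A $$ (i, j) * \<pi> powi g j))"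
     "j < dim_col (mat n n (\<lambda>(i,j). A $$ (i, j) * \<pi> powi g j))"
  then have i: "i < n" and j: "j < n" by auto
  have "(A * varpi_pow n \<pi> g) $$ (i,j) = (\<Sum>l\<in>{0..<n}. A $$ (i, l) * (if l = j then \<pi> powi g l else 0))"
    using i j A by (simp add: varpi_pow_def scalar_prod_def)
  also have "\<dots> = (\<Sum>l\<in>{0..<n}. (if l = j then A $$ (i, l) * \<pi> powi g j else 0))"
    by (intro sum.cong refl) simp
  also have "\<dots> = A $$ (i, j) * \<pi> powi g j"
    using j by (simp add: sum.delta')
  finally show "(A * varpi_pow n \<pi> g) $$ (i,j) = mat n n (\<lambda>(i,j). A $$ (i, j) * \<pi> powi g j) $$ (i,j)"
    using i j by simp
qed (use A in \<open>auto simp: varpi_pow_def\<close>)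

lemma perm_mat_inj:
  assumes s: "\<sigma> permutes {..<n}" and r: "\<rho> permutes {..<n}"
    and e: "perm_mat n \<sigma> = (perm_mat n \<rho> :: 'a::zero_neq_one mat)"
  shows "\<sigma> = \<rho>"
proof
  fix j
  show "\<sigma> j = \<rho> j"
  proof (cases "j < n")
    case True
    have sj: "\<sigma> j < n" using permutes_in_image[OF s] True by simp
    have "(perm_mat n \<sigma> :: 'a mat) $$ (\<sigma> j, j) = 1" using True sj by (simp add: perm_mat_def)
    then have "(perm_mat n \<rho> :: 'a mat) $$ (\<sigma> j, j) = 1" using e by simp
    then show ?thesis using True sj by (simp add: perm_mat_def split: if_splits)
  next
    case False
    then show ?thesis using permutes_not_in[OF s] permutes_not_in[OF r] by simp
  qed
qed

lemma d_elt_perm: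
  assumes s: "\<sigma> permutes {..<n}"
  shows "d_elt n (\<pi>::'a::field) (perm_mat n \<sigma>) = varpi_pow n \<pi> (d_exp n \<sigma>)"
proof -
  have "(THE \<rho>. \<rho> permutes {..<n} \<and> (perm_mat n \<sigma> :: 'a mat) = perm_mat n \<rho>) = \<sigma>"
    by (rule the_equality) (use s perm_mat_inj in auto)
  then show ?thesis by (simp add: d_elt_def)
qed

lemma key:
  assumes s: "\<sigma> permutes {..<n}" and n: "n \<ge> 1"
    and invc: "Hilbert_Choice.inv \<rho> = Hilbert_Choice.inv \<sigma> \<circ> tau n"
  shows "\<forall>i. i + m = n - 1 \<longrightarrow> d_exp n \<rho> i
     = d_exp n \<sigma> (tau n i) + d_exp n (tau n) i - d_exp n \<sigma> 0"
proof (induction m)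
  case 0
  have "tau n (n - 1) = 0" using n by (simp add: tau_def)
  moreover have "d_exp n (\<rho>) (n - 1) = 0" "d_exp n (tau n) (n - 1) = 0"
    using d_exp_prop[of n "\<rho>"] d_exp_prop[of n "tau n"] unfolding dprop_def by blast+
  ultimately show ?case
  proof (intro allI impI)
    fix i assume "i + 0 = n - 1"
    then have i: "i = n - 1" by simp
    assume f: "tau n (n - 1) = 0" "d_exp n (\<rho>) (n - 1) = 0" "d_exp n (tau n) (n - 1) = 0"
    show "d_exp n (\<rho>) i = d_exp n \<sigma> (tau n i) + d_exp n (tau n) i - d_exp n \<sigma> 0"
      unfolding i f by simp
  qed
next
  case (Suc m)
  show ?case
  proof (intro allI impI)
    fix i assume h: "i + Suc m = n - 1"
    define a where "a = d_exp n \<sigma>"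
    define b where "b = d_exp n (\<rho>)"
    define c where "c = d_exp n (tau n)"
    define j where "j = n - 2 - i"
    have i1: "i + 1 < n" using h by simp
    have ti: "tau n i = j + 1" and ti1: "tau n (i+1) = j" using i1 by (auto simp: tau_def j_def)
    have j1: "j + 1 < n" using i1 by (simp add: j_def)
    have IH: "b (i+1) = a j + c (i+1) - a 0"
      using Suc h ti1 unfolding a_def b_def c_def by simp
    have B: "b i - b (i+1) = (if Hilbert_Choice.inv \<sigma> (j+1) < Hilbert_Choice.inv \<sigma> j then 0 else -1)"
      using d_exp_prop[of n "\<rho>"] i1 ti ti1 invc unfolding b_def dprop_def by simp
    have A: "a j - a (j+1) = (if Hilbert_Choice.inv \<sigma> j < Hilbert_Choice.inv \<sigma> (j+1) then 0 else -1)"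
      using d_exp_prop[of n \<sigma>] j1 unfolding a_def dprop_def by simp
    have C: "c i - c (i+1) = -1"
      using d_exp_prop[of n "tau n"] i1 ti ti1 inv_tau unfolding c_def dprop_def by simp
    have ne: "Hilbert_Choice.inv \<sigma> j \<noteq> Hilbert_Choice.inv \<sigma> (j+1)"
      using permutes_inj[OF permutes_inv[OF s]] by (auto dest: injD)
    have "b i = a (j+1) + c i - a 0"
      using IH A B C ne by (auto split: if_splits)
    then show "b i = a (tau n i) + c i - a 0" using ti by simp
  qed
qed

lemma key2:
  assumes s: "\<sigma> permutes {..<n}" and n: "n \<ge> 1" and i: "i < n"
  shows "d_exp n (tau n \<circ> \<sigma>) i = d_exp n \<sigma> (tau n i) + d_exp n (tau n) i - d_exp n \<sigma> 0"
proof -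
  have invc: "Hilbert_Choice.inv (tau n \<circ> \<sigma>) = Hilbert_Choice.inv \<sigma> \<circ> tau n"
    using o_inv_distrib[OF permutes_bij[OF tau_permutes] permutes_bij[OF s]] inv_tau by simp
  show ?thesis using key[OF s n invc, of "n - 1 - i"] i by simp
qed


theorem mainTheorem12:
  fixes v :: "'a::field \<Rightarrow> int" and \<pi> :: 'a and n :: nat
  assumes "nonarch_local_field_unif v \<pi>"
    and "n \<ge> 1"
  shows "\<forall>w \<in> weyl n. \<exists>z \<in> center_GL n.
           d_elt n \<pi> (w0 n * w) = w0 n * d_elt n \<pi> w * w0 n * d_elt n \<pi> (w0 n) * z"
proof
  fix w :: "'a mat" assume "w \<in> weyl n"
  then obtain \<sigma> where s: "\<sigma> permutes {..<n}" and w: "w = perm_mat n \<sigma>"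
    by (auto simp: weyl_def)
  have pi0: "\<pi> \<noteq> 0" using assms(1) by (simp add: nonarch_local_field_unif_def)
  define a where "a = d_exp n \<sigma>"
  define b where "b = d_exp n (tau n \<circ> \<sigma>)"
  define c where "c = d_exp n (tau n)"
  define z :: "'a mat" where "z = (\<pi> powi (- a 0)) \<cdot>\<^sub>m 1\<^sub>m n"
  have zc: "z \<in> center_GL n" unfolding z_def center_GL_def using pi0 by auto
  have ts: "tau n \<circ> \<sigma> permutes {..<n}" by (rule permutes_compose[OF s tau_permutes])
  have w0w: "w0 n * w = (perm_mat n (tau n \<circ> \<sigma>) :: 'a mat)"
    unfolding w w0_eq
    apply (subst perm_right[OF s], simp)
    apply (rule eq_matI)
    using permutes_in_image[OF s] apply (auto simp: perm_mat_def)
    done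
  have L: "d_elt n \<pi> (w0 n * w) = varpi_pow n \<pi> b"
    unfolding w0w b_def by (rule d_elt_perm[OF ts])
  have Dw: "d_elt n \<pi> w = varpi_pow n \<pi> a" unfolding w a_def by (rule d_elt_perm[OF s])
  have Dw0: "d_elt n \<pi> (w0 n) = varpi_pow n \<pi> c" unfolding w0_eq c_def by (rule d_elt_perm[OF tau_permutes])
  have tin: "\<And>i. i < n \<Longrightarrow> tau n i < n" by (auto simp: tau_def)
  have tinj: "\<And>i j. tau n i = tau n j \<longleftrightarrow> i = j" by (metis tau_invol)
  have M: "w0 n * varpi_pow n \<pi> a * w0 n * varpi_pow n \<pi> c
      = mat n n (\<lambda>(i,j). varpi_pow n \<pi> a $$ (tau n i, tau n j) * \<pi> powi c j)"
    unfolding w0_eq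
    apply (subst perm_left[OF tau_permutes], simp)
    apply (subst perm_right[OF tau_permutes], simp)
    apply (subst diag_right, simp)
    apply (rule eq_matI)
    apply (auto simp: inv_tau tin)
    done
  have "varpi_pow n \<pi> b = w0 n * varpi_pow n \<pi> a * w0 n * varpi_pow n \<pi> c * z"
  proof -
    have "w0 n * varpi_pow n \<pi> a * w0 n * varpi_pow n \<pi> c * z
       = (\<pi> powi (- a 0)) \<cdot>\<^sub>m (w0 n * varpi_pow n \<pi> a * w0 n * varpi_pow n \<pi> c)"
      unfolding z_def M by (subst mult_smult_distrib[of _ n n]) auto
    also have "\<dots> = varpi_pow n \<pi> b"
    proof (rule eq_matI)
      fix i j assume "i < dim_row (varpi_pow n \<pi> b)" "j < dim_col (varpi_pow n \<pi> b)"
      then have i: "i < n" and j: "j < n" by (auto simp: varpi_pow_def)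
      have bi: "b i = a (tau n i) + c i - a 0"
        unfolding a_def b_def c_def by (rule key2[OF s assms(2) i])
      have pw: "\<pi> powi b i = \<pi> powi (- a 0) * (\<pi> powi a (tau n i) * \<pi> powi c i)"
      proof -
        have e: "b i = - a 0 + (a (tau n i) + c i)" using bi by simp
        show ?thesis unfolding e
          using power_int_add[of \<pi> "- a 0" "a (tau n i) + c i"] power_int_add[of \<pi> "a (tau n i)" "c i"] pi0
          by simp
      qed
      show "((\<pi> powi (- a 0)) \<cdot>\<^sub>m (w0 n * varpi_pow n \<pi> a * w0 n * varpi_pow n \<pi> c)) $$ (i, j)
         = varpi_pow n \<pi> b $$ (i, j)"
        unfolding M using i j tin[OF i] tin[OF j] pi0
        using pw by (auto simp: varpi_pow_def tinj)
    qed (auto simp: M varpi_pow_def w0_eq perm_mat_def)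
    finally show ?thesis by simp
  qed
  then show "\<exists>z \<in> center_GL n.
           d_elt n \<pi> (w0 n * w) = w0 n * d_elt n \<pi> w * w0 n * d_elt n \<pi> (w0 n) * z"
    using zc L Dw Dw0 by auto
qed

end
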